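(* Let $\Omega\subset\mathbb{R}^3$ be open and bounded, $c_0,\tau_1,\epsilon,T>0$, $k_c:=\frac2{\tau_1c_0}$, $D:=2\big(\frac{c_0}{k_c}+\epsilon\big)T$. Then the operator $\mathcal{A}\circ\mathcal{R}_D:L^2(\Omega)\to L^2(\mathbb{R}^3)$, where $$\mathcal{A}:=\big(\mathrm{Id}+\tau_1^2c_0^2\Delta\big)^2+c_0^2\Delta\mathcal{J}_T ,$$ is injective.
   Context: Functions in $L^2(\Omega)$ are extended by zero to $\mathbb{R}^3$. $g_D(\mathbf{x})=(4\pi D)^{-3/2}e^{-|\mathbf{x}|^2/(4D)}$ and $\mathcal{R}_Df:=g_D*_{\mathbf{x}}f$. Let $\vartheta(k):=c_0k\sqrt{1-k^2/k_c^2}$. $\mathcal{J}_T$ is the spatial Fourier multiplier $\widehat{\mathcal{J}_T\xi}(\mathbf{k})=\frac{\sin^2(\vartheta(|\mathbf{k}|)T)}{\vartheta(|\mathbf{k}|)^2}\hat\xi(\mathbf{k})$ (for $|\mathbf{k}|>k_c$ the multiplier is $\sinh^2(|\vartheta|T)/|\vartheta|^2$), and $\Delta$ is the Fourier multiplier $-|\mathbf{k}|^2$. *)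

theory Defs
  imports "HOL-Analysis.Analysis"
begin

definition heat_kernel :: "real \<Rightarrow> real^3 \<Rightarrow> real" where
  "heat_kernel s x = (4 * pi * s) powr (-3/2) * exp (- (norm x)\<^sup>2 / (4 * s))"

text \<open>R_D f = g_D * f (f is already extended by zero to R^3).\<close>
definition heat_smooth :: "real \<Rightarrow> (real^3 \<Rightarrow> real) \<Rightarrow> real^3 \<Rightarrow> real" where
  "heat_smooth s f x = (\<integral>y. heat_kernel s (x - y) * f y \<partial>lborel)"

definition fourier3 :: "(real^3 \<Rightarrow> real) \<Rightarrow> real^3 \<Rightarrow> complex" where
  "fourier3 h k = (\<integral>x. cis (- (k \<bullet> x)) * complex_of_real (h x) \<partial>lborel)"

text \<open>Multiplier of J_T at radius r = |k|: sin^2(theta T)/theta^2 for r <= kc,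
  sinh^2(|theta| T)/|theta|^2 for r > kc, theta(r) = c0 r sqrt(1 - r^2/kc^2)
  (value T^2 at the removable points theta = 0).\<close>
definition J_symbol :: "real \<Rightarrow> real \<Rightarrow> real \<Rightarrow> real \<Rightarrow> real" where
  "J_symbol c0 kc T r =
     (if r \<le> kc then
        (let \<theta> = c0 * r * sqrt (1 - r\<^sup>2 / kc\<^sup>2)
         in if \<theta> = 0 then T\<^sup>2 else (sin (\<theta> * T))\<^sup>2 / \<theta>\<^sup>2)
      else
        (let \<theta> = c0 * r * sqrt (r\<^sup>2 / kc\<^sup>2 - 1)
         in (sinh (\<theta> * T))\<^sup>2 / \<theta>\<^sup>2))"

text \<open>Symbol of A = (Id + tau1^2 c0^2 Delta)^2 + c0^2 Delta J_T, Delta having symbol -|k|^2.\<close>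
definition A_symbol :: "real \<Rightarrow> real \<Rightarrow> real \<Rightarrow> real \<Rightarrow> real^3 \<Rightarrow> real" where
  "A_symbol c0 \<tau>1 kc T k =
     (1 + \<tau>1\<^sup>2 * c0\<^sup>2 * (- (norm k)\<^sup>2))\<^sup>2 + c0\<^sup>2 * (- (norm k)\<^sup>2) * J_symbol c0 kc T (norm k)"

definition L2_on :: "(real^3) set \<Rightarrow> (real^3 \<Rightarrow> real) set" where
  "L2_on \<Omega> = {f. f \<in> borel_measurable lborel \<and> integrable lborel (\<lambda>x. (f x)\<^sup>2)
                   \<and> (\<forall>x. x \<notin> \<Omega> \<longrightarrow> f x = 0)}"

end

theory Submission
  imports Defs "HOL-Probability.Probability" "HOL-Complex_Analysis.Complex_Analysis"
begin


lemma ae_zero_of_open_integrals: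
  fixes h :: "'a::euclidean_space \<Rightarrow> real"
  assumes h: "integrable lborel h"
    and op: "\<And>U. open U \<Longrightarrow> (\<integral>x. indicator U x * h x \<partial>lborel) = 0"
  shows "AE x in lborel. h x = 0"
proof -
  have hm[measurable]: "h \<in> borel_measurable borel" using h by auto
  have int_ind: "integrable lborel (\<lambda>x. indicator A x * h x)" if "A \<in> sets borel" for A
    using integrable_real_mult_indicator[of A lborel h] that h by (simp add: mult.commute)
  have P: "(\<integral>x. indicator A x * h x \<partial>lborel) = 0" if A: "A \<in> sets borel" for A
  proof -
    have AA: "A \<in> sigma_sets UNIV {S. open S}"
      using A unfolding borel_def by (simp add: sets_measure_of)
    have IS: "Int_stable {S::'a set. open S}" by (auto simp: Int_stable_def)
    have PW: "{S::'a set. open S} \<subseteq> Pow UNIV" by auto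
    from IS PW AA show ?thesis
    proof (induction rule: sigma_sets_induct_disjoint)
      case (basic A) then show ?case using op by auto
    next
      case empty then show ?case by simp
    next
      case (compl A)
      have Ab: "A \<in> sets borel" using compl(1) unfolding borel_def by (simp add: sets_measure_of)
      have "indicator (UNIV - A) x * h x = indicator UNIV x * h x - indicator A x * h x" for x
        by (simp add: indicator_def)
      then have "(\<integral>x. indicator (UNIV - A) x * h x \<partial>lborel)
          = (\<integral>x. indicator UNIV x * h x \<partial>lborel) - (\<integral>x. indicator A x * h x \<partial>lborel)"
        using int_ind[OF Ab] int_ind[of UNIV] by simp
      then show ?case using compl(2) op[of UNIV] by simp
    next
      case (union A)
      have Ab: "A i \<in> sets borel" for i using union(2) unfolding borel_def by (auto simp: sets_measure_of)
      have fin: "(\<integral>x. indicator (\<Union>i<n. A i) x * h x \<partial>lborel) = 0" for n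
      proof (induction n)
        case 0 then show ?case by simp
      next
        case (Suc n)
        have d: "(\<Union>i<n. A i) \<inter> A n = {}"
          proof (rule ccontr)
          assume "(\<Union>i<n. A i) \<inter> A n \<noteq> {}"
          then obtain x i where "i < n" "x \<in> A i" "x \<in> A n" by auto
          with union(1) show False unfolding disjoint_family_on_def by (metis IntI empty_iff less_irrefl_nat UNIV_I)
        qed
        have "indicator (\<Union>i<Suc n. A i) x * h x = indicator (\<Union>i<n. A i) x * h x + indicator (A n) x * h x" for x
        proof -
          have "(\<Union>i<Suc n. A i) = (\<Union>i<n. A i) \<union> A n" by (auto simp: lessThan_Suc)
          then show ?thesis using d by (auto simp: indicator_def)
        qed
        then have "(\<integral>x. indicator (\<Union>i<Suc n. A i) x * h x \<partial>lborel)
            = (\<integral>x. indicator (\<Union>i<n. A i) x * h x \<partial>lborel) + (\<integral>x. indicator (A n) x * h x \<partial>lborel)"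
          using int_ind[of "\<Union>i<n. A i"] int_ind[OF Ab] Ab by simp
        then show ?case using Suc union(3) by simp
      qed
      have "(\<lambda>n. \<integral>x. indicator (\<Union>i<n. A i) x * h x \<partial>lborel) \<longlonglongrightarrow> (\<integral>x. indicator (\<Union>i. A i) x * h x \<partial>lborel)"
      proof (rule integral_dominated_convergence[where w="\<lambda>x. norm (h x)"])
        show "(\<lambda>x. indicator (\<Union>i. A i) x * h x) \<in> borel_measurable lborel"
          using Ab by measurable
        show "(\<lambda>x. indicator (\<Union>i<n. A i) x * h x) \<in> borel_measurable lborel" for n
          using Ab by measurable
        show "integrable lborel (\<lambda>x. norm (h x))" using h by simp
        show "AE x in lborel. (\<lambda>n. indicator (\<Union>i<n. A i) x * h x) \<longlonglongrightarrow> indicator (\<Union>i. A i) x * h x"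
          by (intro AE_I2 tendsto_mult LIMSEQ_indicator_UN tendsto_const)
        show "AE x in lborel. norm (indicator (\<Union>i<n. A i) x * h x) \<le> norm (h x)" for n
          by (intro AE_I2) (auto simp: indicator_def)
      qed
      then show ?case using fin by (simp add: LIMSEQ_const_iff)
    qed
  qed
  have pos: "(\<integral>x. max (h x) 0 \<partial>lborel) = 0"
  proof -
    have "max (h x) 0 = indicator {x. 0 < h x} x * h x" for x by (auto simp: indicator_def)
    then show ?thesis using P[of "{x. 0 < h x}"] by simp
  qed
  have neg: "(\<integral>x. max (- h x) 0 \<partial>lborel) = 0"
  proof -
    have "max (- h x) 0 = - (indicator {x. h x < 0} x * h x)" for x by (auto simp: indicator_def)
    then show ?thesis using P[of "{x. h x < 0}"] by simp
  qed
  have "AE x in lborel. max (h x) 0 = 0"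
    using pos by (subst integral_nonneg_eq_0_iff_AE[symmetric]) (auto intro: h)
  moreover have "AE x in lborel. max (- h x) 0 = 0"
    using neg h by (subst integral_nonneg_eq_0_iff_AE[symmetric]) (auto intro: integrable_max integrable_minus)
  ultimately show ?thesis by eventually_elim auto
qed




definition tsum :: "(complex \<times> 'a::real_inner) list \<Rightarrow> 'a \<Rightarrow> complex" where
  "tsum xs x = (\<Sum>(c,w)\<leftarrow>xs. c * cis (w \<bullet> x))"

lemma tsum_Nil[simp]: "tsum [] x = 0" by (simp add: tsum_def)
lemma tsum_Cons[simp]: "tsum ((c,w)#xs) x = c * cis (w \<bullet> x) + tsum xs x" by (simp add: tsum_def)
lemma tsum_append[simp]: "tsum (xs @ ys) x = tsum xs x + tsum ys x" by (simp add: tsum_def)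

lemma tsum_cnj: "tsum (map (\<lambda>(c,w). (cnj c, -w)) xs) x = cnj (tsum xs x)"
  by (induction xs) (auto simp: cis_cnj)

lemma tsum_half: "tsum (map (\<lambda>(c,w). (c/2, w)) xs) x = tsum xs x / 2"
  by (induction xs) (auto simp: add_divide_distrib)

lemma tsum_mult1: "tsum (map (\<lambda>(d,v). (c*d, w+v)) ys) x = c * cis (w \<bullet> x) * tsum ys x"
  by (induction ys) (auto simp: inner_add_left cis_mult[symmetric] algebra_simps)

lemma tsum_mult: "tsum (concat (map (\<lambda>(c,w). map (\<lambda>(d,v). (c*d, w+v)) ys) xs)) x = tsum xs x * tsum ys x"
  by (induction xs) (auto simp: tsum_mult1 algebra_simps)

definition trig :: "(complex \<times> 'a::real_inner) list \<Rightarrow> 'a \<Rightarrow> real" where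
  "trig xs x = Re (tsum xs x)"

lemma continuous_tsum: "continuous_on S (tsum xs)"
  by (induction xs) (auto simp: tsum_def[symmetric] intro!: continuous_intros)

lemma trig_ring:
  fixes K :: "'a::euclidean_space set"
  assumes "compact K"
  shows "function_ring_on (range trig) K"
proof
  show "compact K" by fact
next
  fix f :: "'a \<Rightarrow> real" assume "f \<in> range trig"
  then obtain xs where f: "f = trig xs" by auto
  show "continuous_on K f" unfolding f trig_def
    by (intro continuous_intros continuous_tsum)
next
  fix f g :: "'a \<Rightarrow> real" assume "f \<in> range trig" "g \<in> range trig"
  then obtain xs ys where f: "f = trig xs" and g: "g = trig ys" by auto
  show "(\<lambda>x. f x + g x) \<in> range trig"
    by (rule range_eqI[of _ _ "xs @ ys"]) (simp add: f g trig_def fun_eq_iff)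
  let ?p = "\<lambda>ys. concat (map (\<lambda>(c,w). map (\<lambda>(d,v). (c*d, w+v)) ys) xs)"
  have "Re a * Re b = Re (a * b) / 2 + Re (a * cnj b) / 2" for a b :: complex
    by (simp add: field_simps)
  then have "f x * g x = trig (map (\<lambda>(c,w). (c/2, w)) (?p ys @ ?p (map (\<lambda>(c,w). (cnj c, -w)) ys))) x" for x
    unfolding f g trig_def tsum_half tsum_append tsum_mult tsum_cnj by (simp add: add_divide_distrib)
  then have "(\<lambda>x. f x * g x) = trig (map (\<lambda>(c,w). (c/2, w)) (?p ys @ ?p (map (\<lambda>(c,w). (cnj c, -w)) ys)))"
    by (intro ext) blast
  then show "(\<lambda>x. f x * g x) \<in> range trig" by blast
next
  fix c :: real
  show "(\<lambda>_. c) \<in> range trig"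
    by (rule range_eqI[of _ _ "[(complex_of_real c, 0)]"]) (simp add: trig_def fun_eq_iff)
next
  fix x y :: 'a assume "x \<noteq> y"
  define w where "w = (pi / (norm (x - y))\<^sup>2) *\<^sub>R (x - y)"
  have n: "(norm (x - y))\<^sup>2 \<noteq> 0" using \<open>x \<noteq> y\<close> by simp
  have "w \<bullet> x - w \<bullet> y = pi"
  proof -
    have "w \<bullet> x - w \<bullet> y = w \<bullet> (x - y)" by (simp add: inner_diff_right)
    also have "\<dots> = pi / (norm (x - y))\<^sup>2 * ((x - y) \<bullet> (x - y))" by (simp add: w_def)
    also have "\<dots> = pi" using n by (simp add: power2_norm_eq_inner)
    finally show ?thesis .
  qed
  then have wy: "w \<bullet> y = w \<bullet> x - pi" by simp
  have cy: "cos (w \<bullet> y) = - cos (w \<bullet> x)" "sin (w \<bullet> y) = - sin (w \<bullet> x)"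
    by (simp_all add: wy cos_diff sin_diff)
  show "\<exists>f\<in>range trig. f x \<noteq> f y"
  proof (cases "cos (w \<bullet> x) = 0")
    case True
    then have "sin (w \<bullet> x) \<noteq> 0" using sin_cos_squared_add[of "w \<bullet> x"] by auto
    then have "trig [(-\<i>, w)] x \<noteq> trig [(-\<i>, w)] y" by (simp add: trig_def cy)
    then show ?thesis by blast
  next
    case False
    then have "trig [(1, w)] x \<noteq> trig [(1, w)] y" by (simp add: trig_def cy)
    then show ?thesis by blast
  qed
qed




lemma tsum_integral:
  fixes h :: "'a::euclidean_space \<Rightarrow> real"
  assumes h: "integrable lborel h"
    and F: "\<And>w. (\<integral>x. cis (w \<bullet> x) * complex_of_real (h x) \<partial>lborel) = 0"
  shows "integrable lborel (\<lambda>x. tsum xs x * complex_of_real (h x))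
       \<and> (\<integral>x. tsum xs x * complex_of_real (h x) \<partial>lborel) = 0"
proof (induction xs)
  case Nil then show ?case by simp
next
  case (Cons a xs)
  obtain c w where a: "a = (c, w)" by fastforce
  have hm[measurable]: "h \<in> borel_measurable borel" using h by auto
  have i1: "integrable lborel (\<lambda>x. cis (w \<bullet> x) * complex_of_real (h x))"
  proof (rule Bochner_Integration.integrable_bound[OF h])
    show "(\<lambda>x. cis (w \<bullet> x) * complex_of_real (h x)) \<in> borel_measurable lborel"
    proof -
      have cc: "continuous_on UNIV (\<lambda>x. cis (w \<bullet> x))" unfolding cis_conv_exp by (intro continuous_intros)
      have [measurable]: "(\<lambda>x. cis (w \<bullet> x)) \<in> borel_measurable borel"
        by (rule borel_measurable_continuous_onI[OF cc])
      show ?thesis by measurable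
    qed
    show "AE x in lborel. norm (cis (w \<bullet> x) * complex_of_real (h x)) \<le> norm (h x)"
      by (simp add: norm_mult)
  qed
  have eq: "tsum (a # xs) x * complex_of_real (h x) = c * (cis (w \<bullet> x) * complex_of_real (h x)) + tsum xs x * complex_of_real (h x)" for x
    by (simp add: a algebra_simps)
  show ?case unfolding eq using Cons i1 F[of w] by simp
qed

lemma trig_integral:
  fixes h :: "'a::euclidean_space \<Rightarrow> real"
  assumes h: "integrable lborel h"
    and F: "\<And>w. (\<integral>x. cis (w \<bullet> x) * complex_of_real (h x) \<partial>lborel) = 0"
  shows "integrable lborel (\<lambda>x. trig xs x * h x) \<and> (\<integral>x. trig xs x * h x \<partial>lborel) = 0"
proof -
  note T = tsum_integral[OF h F, of xs]
  have e: "trig xs x * h x = Re (tsum xs x * complex_of_real (h x))" for x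
    by (simp add: trig_def)
  have i: "integrable lborel (\<lambda>x. Re (tsum xs x * complex_of_real (h x)))"
    using T by (intro integrable_Re) auto
  have "(\<integral>x. Re (tsum xs x * complex_of_real (h x)) \<partial>lborel) = Re (\<integral>x. tsum xs x * complex_of_real (h x) \<partial>lborel)"
    using T by (intro integral_Re) auto
  then show ?thesis using i T unfolding e by simp
qed

lemma fourier_unique:
  fixes h :: "'a::euclidean_space \<Rightarrow> real"
  assumes h: "integrable lborel h" and K: "compact K" and out: "\<And>x. x \<notin> K \<Longrightarrow> h x = 0"
    and F: "\<And>w. (\<integral>x. cis (w \<bullet> x) * complex_of_real (h x) \<partial>lborel) = 0"
  shows "AE x in lborel. h x = 0"
proof -
  have hm[measurable]: "h \<in> borel_measurable borel" using h by auto
  interpret R: function_ring_on "range trig" K using trig_ring[OF K] .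
  have cont: "(\<integral>x. \<phi> x * h x \<partial>lborel) = 0"
    if phic: "continuous_on UNIV \<phi>" and phib: "\<And>x. \<bar>\<phi> x\<bar> \<le> 1" for \<phi> :: "'a \<Rightarrow> real"
  proof -
    have pm[measurable]: "\<phi> \<in> borel_measurable borel"
      using phic by (intro borel_measurable_continuous_onI) auto
    have ip: "integrable lborel (\<lambda>x. \<phi> x * h x)"
    proof (rule Bochner_Integration.integrable_bound[OF h])
      show "(\<lambda>x. \<phi> x * h x) \<in> borel_measurable lborel" by measurable
      show "AE x in lborel. norm (\<phi> x * h x) \<le> norm (h x)"
        using phib by (auto simp: abs_mult intro!: mult_left_le_one_le)
    qed
    define C where "C = (\<integral>x. norm (h x) \<partial>lborel) + 1"
    have "0 \<le> (\<integral>x. norm (h x) \<partial>lborel)" by (rule integral_nonneg_AE) auto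
    then have C: "C > 0" unfolding C_def by linarith
    have bnd: "\<bar>\<integral>x. \<phi> x * h x \<partial>lborel\<bar> \<le> e * C" if e: "e > 0" for e
    proof -
      obtain g where g: "g \<in> range trig" and ge: "\<forall>x\<in>K. \<bar>\<phi> x - g x\<bar> < e"
        using R.Stone_Weierstrass_basic[of \<phi> e] e phic continuous_on_subset by blast
      obtain xs where gx: "g = trig xs" using g by auto
      note T = trig_integral[OF h F, of xs]
      have "(\<integral>x. \<phi> x * h x \<partial>lborel) = (\<integral>x. (\<phi> x - g x) * h x \<partial>lborel)"
        using ip T by (simp add: gx left_diff_distrib)
      also have "\<bar>\<dots>\<bar> \<le> (\<integral>x. e * \<bar>h x\<bar> \<partial>lborel)"
      proof -
        have i1: "integrable lborel (\<lambda>x. (\<phi> x - g x) * h x)"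
          using ip T by (simp add: gx left_diff_distrib)
        have i2: "integrable lborel (\<lambda>x. e * \<bar>h x\<bar>)" using h by simp
        have pw: "\<bar>(\<phi> x - g x) * h x\<bar> \<le> e * \<bar>h x\<bar>" for x
        proof (cases "x \<in> K")
          case True then show ?thesis using ge by (auto simp: abs_mult intro!: mult_right_mono)
        next
          case False then show ?thesis using out[of x] e by simp
        qed
        have "\<bar>\<integral>x. (\<phi> x - g x) * h x \<partial>lborel\<bar> \<le> (\<integral>x. \<bar>(\<phi> x - g x) * h x\<bar> \<partial>lborel)"
          using integral_norm_bound[of lborel "\<lambda>x. (\<phi> x - g x) * h x"] by simp
        also have "\<dots> \<le> (\<integral>x. e * \<bar>h x\<bar> \<partial>lborel)"
          by (rule integral_mono[OF _ i2 pw]) (use i1 in auto)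
        finally show ?thesis .
      qed
      also have "\<dots> \<le> e * C" using e by (simp add: C_def)
      finally show ?thesis .
    qed
    show ?thesis
    proof (rule ccontr)
      assume ne: "(\<integral>x. \<phi> x * h x \<partial>lborel) \<noteq> 0"
      define e where "e = \<bar>\<integral>x. \<phi> x * h x \<partial>lborel\<bar> / (2 * C)"
      have "e > 0" using ne C by (simp add: e_def)
      from bnd[OF this] have "\<bar>\<integral>x. \<phi> x * h x \<partial>lborel\<bar> \<le> \<bar>\<integral>x. \<phi> x * h x \<partial>lborel\<bar> / 2"
        using C by (simp add: e_def)
      then show False using ne by simp
    qed
  qed
  show ?thesis
  proof (rule ae_zero_of_open_integrals[OF h])
    fix U :: "'a set" assume U: "open U"
    show "(\<integral>x. indicator U x * h x \<partial>lborel) = 0"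
    proof (cases "U = UNIV")
      case True then show ?thesis using cont[of "\<lambda>_. 1"] by simp
    next
      case False
      define \<phi> where "\<phi> n x = min 1 (real n * infdist x (- U))" for n x
      have phic: "continuous_on UNIV (\<phi> n)" for n
        unfolding \<phi>_def by (intro continuous_intros continuous_infdist continuous_at_imp_continuous_on) auto
      have phib: "\<bar>\<phi> n x\<bar> \<le> 1" for n x
        unfolding \<phi>_def using infdist_nonneg[of x "- U"] by auto
      have pm[measurable]: "\<phi> n \<in> borel_measurable borel" for n
        using phic by (intro borel_measurable_continuous_onI) auto
      have lim: "(\<lambda>n. \<phi> n x) \<longlonglongrightarrow> indicator U x" for x
      proof (cases "x \<in> U")
        case True
        have cl: "closed (- U)" using U by auto
        have "infdist x (- U) > 0"
          using infdist_pos_not_in_closed[OF cl] False True by auto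
        then have "eventually (\<lambda>n. \<phi> n x = 1) sequentially"
        proof -
          assume p: "infdist x (- U) > 0"
          obtain N :: nat where "1 / infdist x (- U) < N" using reals_Archimedean2 by blast
          then have "real n * infdist x (- U) \<ge> 1" if "n \<ge> N" for n
            using that p by (smt (verit, ccfv_SIG) divide_less_eq mult_right_mono of_nat_mono)
          then show ?thesis unfolding \<phi>_def eventually_sequentially by (intro exI[of _ N]) auto
        qed
        then show ?thesis using True by (simp add: tendsto_eventually)
      next
        case False
        then have "infdist x (- U) = 0" by simp
        then show ?thesis using False by (simp add: \<phi>_def)
      qed
      have "(\<lambda>n. \<integral>x. \<phi> n x * h x \<partial>lborel) \<longlonglongrightarrow> (\<integral>x. indicator U x * h x \<partial>lborel)"
      proof (rule integral_dominated_convergence[where w="\<lambda>x. norm (h x)"])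
        show "(\<lambda>x. indicator U x * h x) \<in> borel_measurable lborel" using U h by (intro borel_measurable_times borel_measurable_indicator) auto
        show "(\<lambda>x. \<phi> n x * h x) \<in> borel_measurable lborel" for n by measurable
        show "integrable lborel (\<lambda>x. norm (h x))" using h by simp
        show "AE x in lborel. (\<lambda>n. \<phi> n x * h x) \<longlonglongrightarrow> indicator U x * h x"
          by (intro AE_I2 tendsto_mult lim tendsto_const)
        show "AE x in lborel. norm (\<phi> n x * h x) \<le> norm (h x)" for n
          using phib by (auto simp: abs_mult intro!: mult_left_le_one_le)
      qed
      then show ?thesis using cont[OF phic phib] by (simp add: LIMSEQ_const_iff)
    qed
  qed
qed




lemma gauss1:
  fixes D s :: real
  assumes D: "D > 0"
  shows "integrable lborel (\<lambda>t. cis (- (s * t)) * complex_of_real ((4*pi*D) powr (-1/2) * exp (- t\<^sup>2 / (4*D))))"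
    and "(\<integral>t. cis (- (s * t)) * complex_of_real ((4*pi*D) powr (-1/2) * exp (- t\<^sup>2 / (4*D))) \<partial>lborel)
         = complex_of_real (exp (- D * s\<^sup>2))"
proof -
  define \<sigma> where "\<sigma> = sqrt (2 * D)"
  have \<sigma>: "\<sigma> > 0" using D by (simp add: \<sigma>_def)
  have \<sigma>2: "\<sigma>\<^sup>2 = 2 * D" using D by (simp add: \<sigma>_def)
  have g: "(4*pi*D) powr (-1/2) * exp (- t\<^sup>2 / (4*D)) = normal_density 0 \<sigma> t" for t
  proof -
    have "(4*pi*D) powr (-1/2) = 1 / sqrt (2 * pi * \<sigma>\<^sup>2)"
      using D by (simp add: \<sigma>2 powr_minus_divide powr_half_sqrt[symmetric] powr_minus mult.assoc)
    then show ?thesis unfolding normal_density_def using \<sigma>2 by (simp add: mult.commute)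
  qed
  show int: "integrable lborel (\<lambda>t. cis (- (s * t)) * complex_of_real ((4*pi*D) powr (-1/2) * exp (- t\<^sup>2 / (4*D))))"
  proof -
    have cc: "continuous_on UNIV (\<lambda>t. cis (- (s * t)))" unfolding cis_conv_exp by (intro continuous_intros)
    have [measurable]: "(\<lambda>t. cis (- (s * t))) \<in> borel_measurable borel"
      by (rule borel_measurable_continuous_onI[OF cc])
    have m: "(\<lambda>t. cis (- (s * t)) * complex_of_real (normal_density 0 \<sigma> t)) \<in> borel_measurable lborel"
      by measurable
    have a: "AE x in lborel. norm (cis (- (s * x)) * complex_of_real (normal_density 0 \<sigma> x)) \<le> norm (normal_density 0 \<sigma> x)"
      by (simp add: norm_mult)
    show ?thesis unfolding g
      by (rule Bochner_Integration.integrable_bound[OF integrable_normal_density[where \<mu>=0 and \<sigma>=\<sigma>, OF \<sigma>] m a])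
  qed
  have "(\<integral>t. cis (- (s * t)) * complex_of_real (normal_density 0 \<sigma> t) \<partial>lborel)
      = \<bar>\<sigma>\<bar> *\<^sub>R (\<integral>x. cis (- (s * (0 + \<sigma> * x))) * complex_of_real (normal_density 0 \<sigma> (0 + \<sigma> * x)) \<partial>lborel)"
    using \<sigma> by (intro lborel_integral_real_affine) simp
  also have "\<dots> = (\<integral>x. std_normal_density x *\<^sub>R iexp ((- (s * \<sigma>)) * x) \<partial>lborel)"
  proof -
    have nd2: "\<sigma> * normal_density 0 \<sigma> (\<sigma> * x) = std_normal_density x" for x
      using \<sigma> by (simp add: normal_density_def power_mult_distrib real_sqrt_mult field_simps)
    have "\<sigma> *\<^sub>R (cis (- (s * (0 + \<sigma> * x))) * complex_of_real (normal_density 0 \<sigma> (0 + \<sigma> * x)))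
             = std_normal_density x *\<^sub>R iexp ((- (s * \<sigma>)) * x)" for x
    proof -
      have "\<sigma> *\<^sub>R (cis (- (s * (0 + \<sigma> * x))) * complex_of_real (normal_density 0 \<sigma> (0 + \<sigma> * x)))
          = cis (- (s * (\<sigma> * x))) * complex_of_real (\<sigma> * normal_density 0 \<sigma> (\<sigma> * x))"
        by (simp add: scaleR_conv_of_real)
      also have "\<dots> = std_normal_density x *\<^sub>R iexp ((- (s * \<sigma>)) * x)"
        unfolding nd2 by (simp add: cis_conv_exp scaleR_conv_of_real mult_ac)
      finally show ?thesis .
    qed
    then show ?thesis using \<sigma> by (simp flip: integral_scaleR_right)
  qed
  also have "\<dots> = char std_normal_distribution (- (s * \<sigma>))"
    unfolding char_def by (subst integral_density) (auto simp: normal_density_nonneg)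
  also have "\<dots> = complex_of_real (exp (- D * s\<^sup>2))"
    by (simp add: char_std_normal_distribution power_mult_distrib \<sigma>2)
  finally show "(\<integral>t. cis (- (s * t)) * complex_of_real ((4*pi*D) powr (-1/2) * exp (- t\<^sup>2 / (4*D))) \<partial>lborel)
         = complex_of_real (exp (- D * s\<^sup>2))" unfolding g .
qed




lemma gaussN:
  fixes k :: "'a::euclidean_space" and D :: real
  assumes D: "D > 0"
  defines "G \<equiv> (\<lambda>z::'a. cis (- (k \<bullet> z)) * complex_of_real ((4*pi*D) powr (- real DIM('a) / 2) * exp (- (norm z)\<^sup>2 / (4*D))))"
  shows "integrable lborel G" and "(\<integral>z. G z \<partial>lborel) = complex_of_real (exp (- D * (norm k)\<^sup>2))"
proof -
  interpret product_sigma_finite "\<lambda>_::'a. lborel :: real measure" by standard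
  define g1 where "g1 = (\<lambda>s t. cis (- (s * t)) * complex_of_real ((4*pi*D) powr (-1/2) * exp (- t\<^sup>2 / (4*D))))"
  define T where "T = (\<lambda>y::'a \<Rightarrow> real. \<Sum>b\<in>Basis. y b *\<^sub>R b)"
  have Tm[measurable]: "T \<in> measurable (\<Pi>\<^sub>M b\<in>Basis. lborel) borel"
    unfolding T_def by measurable
  have cG: "continuous_on UNIV G"
    unfolding G_def cis_conv_exp using D by (intro continuous_intros) auto
  have Gm[measurable]: "G \<in> borel_measurable borel"
    by (rule borel_measurable_continuous_onI[OF cG])
  have Tb: "T y \<bullet> b = y b" if "b \<in> Basis" for y b
    unfolding T_def using that by (simp add: inner_sum_left inner_Basis if_distrib cong: if_cong)
  have kT: "k \<bullet> T y = (\<Sum>b\<in>Basis. (k \<bullet> b) * y b)" for y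
    unfolding T_def by (simp add: inner_sum_right mult.commute)
  have nT: "(norm (T y))\<^sup>2 = (\<Sum>b\<in>Basis. (y b)\<^sup>2)" for y
  proof -
    have "(norm (T y))\<^sup>2 = T y \<bullet> T y" by (simp add: power2_norm_eq_inner)
    also have "\<dots> = T y \<bullet> (\<Sum>b\<in>Basis. y b *\<^sub>R b)" by (simp add: T_def)
    also have "\<dots> = (\<Sum>b\<in>Basis. y b * (T y \<bullet> b))"
      by (simp add: inner_sum_right)
    also have "\<dots> = (\<Sum>b\<in>Basis. (y b)\<^sup>2)"
      by (intro sum.cong refl) (simp add: Tb power2_eq_square)
    finally show ?thesis .
  qed
  have nk: "(norm k)\<^sup>2 = (\<Sum>b\<in>Basis. (k \<bullet> b)\<^sup>2)"
  proof -
    have "(norm k)\<^sup>2 = k \<bullet> k" by (simp add: power2_norm_eq_inner)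
    also have "\<dots> = (\<Sum>b\<in>Basis. (k \<bullet> b) * (k \<bullet> b))"
      by (rule euclidean_inner)
    finally show ?thesis by (simp add: power2_eq_square)
  qed
  have prodG: "G (T y) = (\<Prod>b\<in>Basis. g1 (k \<bullet> b) (y b))" for y
  proof -
    have c: "cis (- (k \<bullet> T y)) = (\<Prod>b\<in>Basis. cis (- ((k \<bullet> b) * y b)))"
      unfolding kT cis_conv_exp
      by (simp add: exp_sum[symmetric] of_real_sum sum_distrib_left sum_negf)
    have p: "(4*pi*D) powr (- real DIM('a) / 2) = (\<Prod>b\<in>(Basis::'a set). (4*pi*D) powr (-1/2))"
      using D by (simp add: powr_power)
    have e: "exp (- (norm (T y))\<^sup>2 / (4*D)) = (\<Prod>b\<in>Basis. exp (- (y b)\<^sup>2 / (4*D)))"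
      unfolding nT by (simp add: exp_sum[symmetric] sum_negf[symmetric] sum_divide_distrib)
    show ?thesis
      unfolding G_def g1_def c p e by (simp add: prod.distrib of_real_prod)
  qed
  have i1: "integrable lborel (g1 s)" for s
    unfolding g1_def using gauss1(1)[OF D] .
  have int_pi: "integrable (\<Pi>\<^sub>M b\<in>Basis. lborel) (\<lambda>y. G (T y))"
    unfolding prodG by (rule product_integrable_prod) (auto intro: i1)
  show "integrable lborel G"
    by (subst lborel_eq) (simp add: integrable_distr_eq T_def[symmetric] int_pi)
  have "(\<integral>z. G z \<partial>lborel) = (\<integral>y. G (T y) \<partial>(\<Pi>\<^sub>M b\<in>Basis. lborel))"
    by (subst lborel_eq) (simp add: integral_distr T_def[symmetric])
  also have "\<dots> = (\<Prod>b\<in>Basis. integral\<^sup>L lborel (g1 (k \<bullet> b)))"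
    unfolding prodG by (rule product_integral_prod) (auto intro: i1)
  also have "\<dots> = (\<Prod>b\<in>(Basis::'a set). complex_of_real (exp (- D * (k \<bullet> b)\<^sup>2)))"
    unfolding g1_def using gauss1(2)[OF D] by simp
  also have "\<dots> = complex_of_real (exp (- D * (norm k)\<^sup>2))"
  proof -
    have "exp (- D * (norm k)\<^sup>2) = (\<Prod>b\<in>(Basis::'a set). exp (- D * (k \<bullet> b)\<^sup>2))"
      unfolding nk by (simp add: exp_sum[symmetric] sum_distrib_left)
    then show ?thesis by (simp add: of_real_prod)
  qed
  finally show "(\<integral>z. G z \<partial>lborel) = complex_of_real (exp (- D * (norm k)\<^sup>2))" .
qed




lemma heat_kernel_cont: "D > 0 \<Longrightarrow> continuous_on UNIV (heat_kernel D)"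
  unfolding heat_kernel_def by (intro continuous_intros) auto

lemma heat_kernel_nonneg: "heat_kernel D x \<ge> 0"
  unfolding heat_kernel_def by simp

lemma heat_kernel_ft:
  fixes k :: "real^3"
  assumes D: "D > 0"
  shows "integrable lborel (\<lambda>z. cis (- (k \<bullet> z)) * complex_of_real (heat_kernel D z))"
    and "(\<integral>z. cis (- (k \<bullet> z)) * complex_of_real (heat_kernel D z) \<partial>lborel) = complex_of_real (exp (- D * (norm k)\<^sup>2))"
proof -
  have e: "heat_kernel D z = (4*pi*D) powr (- real DIM(real^3) / 2) * exp (- (norm z)\<^sup>2 / (4*D))" for z
    by (simp add: heat_kernel_def)
  show "integrable lborel (\<lambda>z. cis (- (k \<bullet> z)) * complex_of_real (heat_kernel D z))"
    unfolding e using gaussN(1)[OF D, of k] .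
  show "(\<integral>z. cis (- (k \<bullet> z)) * complex_of_real (heat_kernel D z) \<partial>lborel) = complex_of_real (exp (- D * (norm k)\<^sup>2))"
    unfolding e using gaussN(2)[OF D, of k] .
qed

lemma heat_kernel_int:
  assumes D: "D > 0"
  shows "integrable lborel (heat_kernel D)" and "(\<integral>z. heat_kernel D z \<partial>lborel) = 1"
proof -
  have "integrable lborel (\<lambda>z. Re (cis (- (0 \<bullet> z)) * complex_of_real (heat_kernel D z)))"
    using heat_kernel_ft(1)[OF D, of 0] by (intro integrable_Re)
  then show "integrable lborel (heat_kernel D)" by simp
  have "Re (\<integral>z. cis (- (0 \<bullet> z)) * complex_of_real (heat_kernel D z) \<partial>lborel) = 1"
    using heat_kernel_ft(2)[OF D, of 0] by simp
  then show "(\<integral>z. heat_kernel D z \<partial>lborel) = 1" by simp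
qed

lemma integrable_translate:
  fixes g :: "'a::euclidean_space \<Rightarrow> 'b::{banach, second_countable_topology}"
  assumes "integrable lborel g"
  shows "integrable lborel (\<lambda>x. g (c + x))"
proof -
  have gm[measurable]: "g \<in> borel_measurable borel" using assms by auto
  have "integrable (distr lborel borel ((+) c)) g" using assms by (simp add: lborel_distr_plus)
  then show ?thesis by (subst (asm) integrable_distr_eq) auto
qed

lemma integral_translate:
  fixes g :: "'a::euclidean_space \<Rightarrow> 'b::{banach, second_countable_topology}"
  assumes gm: "g \<in> borel_measurable borel"
  shows "(\<integral>x. g (c + x) \<partial>lborel) = (\<integral>x. g x \<partial>lborel)"
proof -
  have "(\<integral>x. g x \<partial>lborel) = (\<integral>x. g x \<partial>distr lborel borel ((+) c))" by (simp add: lborel_distr_plus)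
  also have "\<dots> = (\<integral>x. g (c + x) \<partial>lborel)" using gm by (subst integral_distr) auto
  finally show ?thesis by simp
qed

lemma fourier_heat:
  fixes f :: "real^3 \<Rightarrow> real"
  assumes D: "D > 0" and f: "integrable lborel f"
  shows "fourier3 (heat_smooth D f) k = complex_of_real (exp (- D * (norm k)\<^sup>2)) * fourier3 f k"
proof -
  have P: "pair_sigma_finite (lborel :: (real^3) measure) (lborel :: (real^3) measure)" by standard
  have fm[measurable]: "f \<in> borel_measurable borel" using f by auto
  have hm[measurable]: "heat_kernel D \<in> borel_measurable borel"
    by (rule borel_measurable_continuous_onI[OF heat_kernel_cont[OF D]])
  have cc: "continuous_on UNIV (\<lambda>x::real^3. cis (- (k \<bullet> x)))" unfolding cis_conv_exp by (intro continuous_intros)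
  have cm[measurable]: "(\<lambda>x::real^3. cis (- (k \<bullet> x))) \<in> borel_measurable borel"
    by (rule borel_measurable_continuous_onI[OF cc])
  define \<Psi> where "\<Psi> y x = cis (- (k \<bullet> x)) * complex_of_real (heat_kernel D (x - y) * f y)" for y x :: "real^3"
  have \<Psi>m: "case_prod \<Psi> \<in> borel_measurable (lborel \<Otimes>\<^sub>M lborel)"
    unfolding \<Psi>_def by measurable
  have inner_int: "integrable lborel (\<lambda>x. \<Psi> y x)" for y
  proof -
    have "integrable lborel (\<lambda>x. cis (- (k \<bullet> (y + x))) * complex_of_real (heat_kernel D x) * complex_of_real (f y))"
    proof -
      have ce: "cis (- (a + b)) = cis (- a) * cis (- b)" for a b by (simp add: cis_mult)
      have "cis (- (k \<bullet> (y + x))) * complex_of_real (heat_kernel D x) * complex_of_real (f y)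
          = (cis (- (k \<bullet> y)) * complex_of_real (f y)) * (cis (- (k \<bullet> x)) * complex_of_real (heat_kernel D x))" for x
        unfolding inner_add_right ce by (simp add: mult_ac)
      moreover have "integrable lborel (\<lambda>x. (cis (- (k \<bullet> y)) * complex_of_real (f y)) * (cis (- (k \<bullet> x)) * complex_of_real (heat_kernel D x)))"
        using heat_kernel_ft(1)[OF D, of k] by (rule integrable_mult_right)
      ultimately show ?thesis by presburger
    qed
    then have "integrable lborel (\<lambda>x. cis (- (k \<bullet> (y + (x - y)))) * complex_of_real (heat_kernel D (x - y)) * complex_of_real (f y))"
      using integrable_translate[of "\<lambda>x. cis (- (k \<bullet> (y + x))) * complex_of_real (heat_kernel D x) * complex_of_real (f y)" "- y"]
      by simp
    then show ?thesis unfolding \<Psi>_def by (simp add: mult.assoc)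
  qed
  have inner_norm: "(\<integral>x. norm (\<Psi> y x) \<partial>lborel) = \<bar>f y\<bar>" for y
  proof -
    have "(\<integral>x. norm (\<Psi> y x) \<partial>lborel) = (\<integral>x. heat_kernel D (x - y) * \<bar>f y\<bar> \<partial>lborel)"
      unfolding \<Psi>_def by (simp add: norm_mult abs_mult heat_kernel_nonneg)
    also have "\<dots> = (\<integral>x. heat_kernel D (- y + x) * \<bar>f y\<bar> \<partial>lborel)" by simp
    also have "\<dots> = (\<integral>x. heat_kernel D x * \<bar>f y\<bar> \<partial>lborel)"
      by (rule integral_translate[of "\<lambda>x. heat_kernel D x * \<bar>f y\<bar>"]) measurable
    also have "\<dots> = \<bar>f y\<bar>" using heat_kernel_int[OF D] by simp
    finally show ?thesis .
  qed
  have pint: "integrable (lborel \<Otimes>\<^sub>M lborel) (case_prod \<Psi>)"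
  proof (rule pair_sigma_finite.Fubini_integrable[OF P \<Psi>m])
    show "integrable lborel (\<lambda>y. \<integral>x. norm (case_prod \<Psi> (y, x)) \<partial>lborel)"
      using f by (simp add: inner_norm)
    show "AE y in lborel. integrable lborel (\<lambda>x. case_prod \<Psi> (y, x))"
      using inner_int by simp
  qed
  have "fourier3 (heat_smooth D f) k = (\<integral>x. (\<integral>y. \<Psi> y x \<partial>lborel) \<partial>lborel)"
  proof -
    have "(\<integral>y. \<Psi> y x \<partial>lborel) = cis (- (k \<bullet> x)) * complex_of_real (heat_smooth D f x)" for x
    proof -
      have "(\<integral>y. \<Psi> y x \<partial>lborel) = cis (- (k \<bullet> x)) * (\<integral>y. complex_of_real (heat_kernel D (x - y) * f y) \<partial>lborel)"
        unfolding \<Psi>_def by (rule integral_mult_right_zero)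
      also have "(\<integral>y. complex_of_real (heat_kernel D (x - y) * f y) \<partial>lborel) = complex_of_real (heat_smooth D f x)"
        unfolding heat_smooth_def by (rule integral_complex_of_real)
      finally show ?thesis .
    qed
    then show ?thesis unfolding fourier3_def by simp
  qed
  also have "\<dots> = (\<integral>y. (\<integral>x. \<Psi> y x \<partial>lborel) \<partial>lborel)"
    by (rule pair_sigma_finite.Fubini_integral[OF P pint])
  also have "\<dots> = (\<integral>y. complex_of_real (exp (- D * (norm k)\<^sup>2)) * (cis (- (k \<bullet> y)) * complex_of_real (f y)) \<partial>lborel)"
  proof (intro Bochner_Integration.integral_cong refl)
    fix y :: "real^3"
    have "(\<integral>x. \<Psi> y x \<partial>lborel) = (\<integral>x. \<Psi> y (y + x) \<partial>lborel)"
      by (rule integral_translate[symmetric]) (unfold \<Psi>_def, measurable)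
    also have "\<dots> = (\<integral>x. (cis (- (k \<bullet> x)) * complex_of_real (heat_kernel D x)) * (cis (- (k \<bullet> y)) * complex_of_real (f y)) \<partial>lborel)"
    proof (intro Bochner_Integration.integral_cong refl)
      fix x
      have ce: "cis (- (a + b)) = cis (- a) * cis (- b)" for a b by (simp add: cis_mult)
      show "\<Psi> y (y + x) = (cis (- (k \<bullet> x)) * complex_of_real (heat_kernel D x)) * (cis (- (k \<bullet> y)) * complex_of_real (f y))"
        unfolding \<Psi>_def inner_add_right ce by (simp add: mult_ac)
    qed
    also have "\<dots> = complex_of_real (exp (- D * (norm k)\<^sup>2)) * (cis (- (k \<bullet> y)) * complex_of_real (f y))"
      using heat_kernel_ft(2)[OF D, of k] by simp
    finally show "(\<integral>x. \<Psi> y x \<partial>lborel) = complex_of_real (exp (- D * (norm k)\<^sup>2)) * (cis (- (k \<bullet> y)) * complex_of_real (f y))" .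
  qed
  also have "\<dots> = complex_of_real (exp (- D * (norm k)\<^sup>2)) * fourier3 f k"
    unfolding fourier3_def by simp
  finally show ?thesis .
qed




definition ec :: "nat \<Rightarrow> complex" where "ec n = (-1)^n / fact (2*n+1)"
definition Ec :: "complex \<Rightarrow> complex" where "Ec w = (\<Sum>n. ec n * w^n)"

lemma ec_summable: "summable (\<lambda>n. ec n * w^n)"
proof (rule summable_comparison_test[OF _ summable_exp_generic[of "norm w"]])
  show "\<exists>N. \<forall>n\<ge>N. norm (ec n * w ^ n) \<le> norm w ^ n /\<^sub>R fact n"
  proof (intro exI allI impI)
    fix n :: nat
    have f: "fact n \<le> (fact (2*n+1) :: real)" by (intro fact_mono) auto
    have "norm (ec n * w ^ n) = norm w ^ n / fact (2*n+1)"
      by (simp add: ec_def norm_mult norm_divide norm_power norm_fact del: fact_Suc)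
    also have "\<dots> \<le> norm w ^ n / fact n"
      using f by (intro divide_left_mono) auto
    finally show "norm (ec n * w ^ n) \<le> norm w ^ n /\<^sub>R fact n" by (simp add: divide_inverse_commute)
  qed
qed

lemma Ec_sums: "(\<lambda>n. ec n * w^n) sums Ec w"
  unfolding Ec_def using ec_summable by (rule summable_sums)

lemma Ec_holo: "Ec holomorphic_on UNIV"
proof -
  have "(Ec has_field_derivative (\<Sum>n. diffs ec n * z^n)) (at z)" for z
    unfolding Ec_def[abs_def] by (rule termdiffs_strong_converges_everywhere[OF ec_summable])
  then show ?thesis unfolding holomorphic_on_def field_differentiable_def
    by (auto intro: has_field_derivative_at_within)
qed

lemma Ec_0: "Ec 0 = 1"
  by (simp only: Ec_def powser_zero) (simp add: ec_def)

lemma sin_Ec: "sin u = u * Ec (u\<^sup>2)" for u :: complex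
proof -
  let ?f = "\<lambda>m. sin_coeff m *\<^sub>R u^m"
  have sm: "strict_mono (\<lambda>n::nat. 2*n+1)" by (rule strict_monoI) auto
  have z: "?f m = 0" if "m \<notin> range (\<lambda>n::nat. 2*n+1)" for m
  proof -
    have "even m" using that by (metis oddE rangeI)
    then show ?thesis by (simp add: sin_coeff_def)
  qed
  have "(\<lambda>n. ?f (2*n+1)) sums sin u"
  proof -
    have "(\<lambda>n. ?f (2*n+1)) sums sin u \<longleftrightarrow> ?f sums sin u"
      by (rule sums_mono_reindex[OF sm]) (rule z)
    then show ?thesis using sin_converges[of u] by simp
  qed
  moreover have "?f (2*n+1) = u * (ec n * (u\<^sup>2)^n)" for n
  proof -
    have p: "u^(2*n+1) = u * (u\<^sup>2)^n" by (simp add: power_mult[symmetric])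
    have c: "sin_coeff (2*n+1) = (-1)^n / fact (2*n+1)" by (simp add: sin_coeff_def)
    show ?thesis unfolding p c ec_def by (simp add: scaleR_conv_of_real del: fact_Suc)
  qed
  ultimately have "(\<lambda>n. u * (ec n * (u\<^sup>2)^n)) sums sin u" by simp
  moreover have "(\<lambda>n. u * (ec n * (u\<^sup>2)^n)) sums (u * Ec (u\<^sup>2))"
    by (intro sums_mult Ec_sums)
  ultimately show ?thesis using sums_unique2 by blast
qed

lemma sin_real_Ec: "complex_of_real (sin x) = complex_of_real x * Ec (complex_of_real (x\<^sup>2))"
  using sin_Ec[of "complex_of_real x"] by (simp add: sin_of_real)

lemma sinh_real_Ec: "complex_of_real (sinh x) = complex_of_real x * Ec (complex_of_real (- x\<^sup>2))"
proof -
  have "complex_of_real (sinh x) = - \<i> * sin (\<i> * complex_of_real x)"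
    using sinh_real[of x] by (simp add: sinh_def exp_minus divide_simps)
  also have "\<dots> = - \<i> * ((\<i> * complex_of_real x) * Ec ((\<i> * complex_of_real x)\<^sup>2))"
    by (simp add: sin_Ec)
  also have "\<dots> = complex_of_real x * Ec (complex_of_real (- x\<^sup>2))"
  proof -
    have "(\<i> * complex_of_real x)\<^sup>2 = complex_of_real (- x\<^sup>2)" by (simp add: power_mult_distrib)
    moreover have "- \<i> * (\<i> * a * b) = a * b" for a b :: complex
      by (simp add: mult.assoc[symmetric])
    ultimately show ?thesis by simp
  qed
  finally show ?thesis .
qed




lemma Ec_comp_holo: "g holomorphic_on UNIV \<Longrightarrow> (\<lambda>z. Ec (g z)) holomorphic_on UNIV"
  using holomorphic_on_compose_gen[of g UNIV Ec UNIV] Ec_holo by (simp add: o_def)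

lemma J_Ec:
  fixes c0 kc T r :: real
  assumes c0: "c0 > 0" and kc: "kc > 0" and r: "r \<ge> 0"
  shows "complex_of_real (J_symbol c0 kc T r)
       = complex_of_real (T\<^sup>2) * (Ec (complex_of_real (T\<^sup>2 * (c0\<^sup>2 * r\<^sup>2 * (1 - r\<^sup>2 / kc\<^sup>2)))))\<^sup>2"
proof (cases "r \<le> kc")
  case True
  define \<theta> where "\<theta> = c0 * r * sqrt (1 - r\<^sup>2 / kc\<^sup>2)"
  have nn: "1 - r\<^sup>2 / kc\<^sup>2 \<ge> 0"
  proof -
    have "r\<^sup>2 \<le> kc\<^sup>2" using True r by (intro power_mono) auto
    then show ?thesis using kc by (simp add: field_simps)
  qed
  have th2: "\<theta>\<^sup>2 = c0\<^sup>2 * r\<^sup>2 * (1 - r\<^sup>2 / kc\<^sup>2)"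
    unfolding \<theta>_def using nn by (simp add: power_mult_distrib)
  have J: "J_symbol c0 kc T r = (if \<theta> = 0 then T\<^sup>2 else (sin (\<theta> * T))\<^sup>2 / \<theta>\<^sup>2)"
    unfolding J_symbol_def \<theta>_def using True by (simp add: Let_def)
  show ?thesis
  proof (cases "\<theta> = 0")
    case True
    then have "c0\<^sup>2 * r\<^sup>2 * (1 - r\<^sup>2 / kc\<^sup>2) = 0" using th2 by simp
    then have q: "T\<^sup>2 * (c0\<^sup>2 * r\<^sup>2 * (1 - r\<^sup>2 / kc\<^sup>2)) = 0" by simp
    show ?thesis unfolding q using J True by (simp add: Ec_0)
  next
    case False
    have s: "complex_of_real (sin (\<theta> * T)) = complex_of_real (\<theta> * T) * Ec (complex_of_real ((\<theta> * T)\<^sup>2))"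
      by (rule sin_real_Ec)
    have w: "(\<theta> * T)\<^sup>2 = T\<^sup>2 * (c0\<^sup>2 * r\<^sup>2 * (1 - r\<^sup>2 / kc\<^sup>2))"
      by (simp add: power_mult_distrib th2)
    have "complex_of_real (J_symbol c0 kc T r) = (complex_of_real (sin (\<theta> * T)))\<^sup>2 / (complex_of_real \<theta>)\<^sup>2"
      using J False by simp
    also have "\<dots> = complex_of_real (T\<^sup>2) * (Ec (complex_of_real ((\<theta> * T)\<^sup>2)))\<^sup>2"
      unfolding s using False by (simp add: power_mult_distrib field_simps)
    finally show ?thesis unfolding w .
  qed
next
  case False
  define \<theta> where "\<theta> = c0 * r * sqrt (r\<^sup>2 / kc\<^sup>2 - 1)"
  have gt: "r\<^sup>2 / kc\<^sup>2 - 1 > 0"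
  proof -
    have "kc\<^sup>2 < r\<^sup>2" using False kc by (intro power_strict_mono) auto
    then show ?thesis using kc by (simp add: field_simps)
  qed
  have rpos: "r > 0" using False kc by simp
  have "sqrt (r\<^sup>2 / kc\<^sup>2 - 1) > 0" using gt by simp
  then have thne: "\<theta> \<noteq> 0" unfolding \<theta>_def using c0 rpos by (metis mult_pos_pos less_irrefl)
  have th2: "\<theta>\<^sup>2 = c0\<^sup>2 * r\<^sup>2 * (r\<^sup>2 / kc\<^sup>2 - 1)"
    unfolding \<theta>_def using gt by (simp add: power_mult_distrib)
  have J: "J_symbol c0 kc T r = (sinh (\<theta> * T))\<^sup>2 / \<theta>\<^sup>2"
    unfolding J_symbol_def \<theta>_def using False by (simp add: Let_def)
  have s: "complex_of_real (sinh (\<theta> * T)) = complex_of_real (\<theta> * T) * Ec (complex_of_real (- (\<theta> * T)\<^sup>2))"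
    by (rule sinh_real_Ec)
  have w: "- (\<theta> * T)\<^sup>2 = T\<^sup>2 * (c0\<^sup>2 * r\<^sup>2 * (1 - r\<^sup>2 / kc\<^sup>2))"
    by (simp add: power_mult_distrib th2 algebra_simps)
  have "complex_of_real (J_symbol c0 kc T r) = (complex_of_real (sinh (\<theta> * T)))\<^sup>2 / (complex_of_real \<theta>)\<^sup>2"
    using J by simp
  also have "\<dots> = complex_of_real (T\<^sup>2) * (Ec (complex_of_real (- (\<theta> * T)\<^sup>2)))\<^sup>2"
    unfolding s using thne by (simp add: power_mult_distrib field_simps)
  finally show ?thesis unfolding w .
qed

lemma A_nonzero_ae:
  fixes c0 \<tau>1 kc T :: real
  assumes c0: "c0 > 0" and kc: "kc > 0"
  shows "AE k in lborel. A_symbol c0 \<tau>1 kc T k \<noteq> 0"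
proof -
  define \<Phi> where "\<Phi> z = (1 + complex_of_real (\<tau>1\<^sup>2 * c0\<^sup>2) * (- z\<^sup>2))\<^sup>2
      + complex_of_real (c0\<^sup>2) * (- z\<^sup>2) * (complex_of_real (T\<^sup>2) *
        (Ec (complex_of_real (T\<^sup>2) * (complex_of_real (c0\<^sup>2) * z\<^sup>2 * (1 - z\<^sup>2 / complex_of_real (kc\<^sup>2)))))\<^sup>2)" for z
  have holo: "\<Phi> holomorphic_on UNIV"
    unfolding \<Phi>_def using kc
    by (intro holomorphic_intros Ec_comp_holo) auto
  have eq: "complex_of_real (A_symbol c0 \<tau>1 kc T k) = \<Phi> (complex_of_real (norm k))" for k :: "real^3"
    unfolding A_symbol_def \<Phi>_def using J_Ec[OF c0 kc norm_ge_zero[of k], of T]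
    by simp
  have Z: "countable {z \<in> UNIV. \<Phi> z = 0}"
  proof (cases "\<Phi> constant_on UNIV")
    case True
    then have "\<Phi> z = \<Phi> 0" for z unfolding constant_on_def by auto
    moreover have "\<Phi> 0 = 1" by (simp add: \<Phi>_def)
    ultimately have "{z \<in> UNIV. \<Phi> z = 0} = {}" by auto
    then show ?thesis by simp
  next
    case False
    show ?thesis by (rule holomorphic_countable_zeros[OF holo]) (use False in auto)
  qed
  define R where "R = Re ` {z \<in> UNIV. \<Phi> z = 0}"
  have cR: "countable R" unfolding R_def using Z by simp
  have sub: "{k \<in> space lborel. \<not> A_symbol c0 \<tau>1 kc T k \<noteq> 0} \<subseteq> (\<Union>\<rho>\<in>R. sphere (0::real^3) \<rho>)"
  proof
    fix k :: "real^3" assume "k \<in> {k \<in> space lborel. \<not> A_symbol c0 \<tau>1 kc T k \<noteq> 0}"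
    then have "\<Phi> (complex_of_real (norm k)) = 0" using eq[of k] by simp
    then have "norm k \<in> R" unfolding R_def by (intro image_eqI[of _ _ "complex_of_real (norm k)"]) auto
    then show "k \<in> (\<Union>\<rho>\<in>R. sphere 0 \<rho>)" by auto
  qed
  have null: "(\<Union>\<rho>\<in>R. sphere (0::real^3) \<rho>) \<in> null_sets lborel"
  proof (rule null_sets_UN'[OF cR])
    fix \<rho> show "sphere (0::real^3) \<rho> \<in> null_sets lborel"
      using negligible_sphere[of "0::real^3" \<rho>]
      by (auto simp: null_sets_completion_iff negligible_iff_null_sets negligible_convex_frontier)
  qed
  show ?thesis by (rule AE_I'[OF null sub])
qed


lemma abs_le_sq: "\<bar>a::real\<bar> \<le> 1 + a\<^sup>2"
proof (cases "\<bar>a\<bar> \<le> 1")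
  case True then show ?thesis by (smt (verit) zero_le_power2)
next
  case False
  then have "\<bar>a\<bar> * 1 \<le> \<bar>a\<bar> * \<bar>a\<bar>" by (intro mult_left_mono) auto
  then show ?thesis by (simp add: power2_eq_square abs_mult_self_eq)
qed

lemma L2_integrable:
  fixes f :: "real^3 \<Rightarrow> real"
  assumes f: "f \<in> L2_on \<Omega>" and op: "open \<Omega>" and bd: "bounded \<Omega>"
  shows "integrable lborel f"
proof -
  have fm[measurable]: "f \<in> borel_measurable lborel" and f2: "integrable lborel (\<lambda>x. (f x)\<^sup>2)"
    and out: "\<And>x. x \<notin> \<Omega> \<Longrightarrow> f x = 0"
    using f unfolding L2_on_def by auto
  have Om: "\<Omega> \<in> sets lborel" using op by auto
  have ii: "integrable lborel (indicator \<Omega> :: real^3 \<Rightarrow> real)"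
    using emeasure_bounded_finite[OF bd] Om by (simp add: less_top[symmetric])
  have "integrable lborel (\<lambda>x. indicator \<Omega> x + (f x)\<^sup>2)" using ii f2 by simp
  then show ?thesis
  proof (rule Bochner_Integration.integrable_bound)
    show "f \<in> borel_measurable lborel" by fact
    show "AE x in lborel. norm (f x) \<le> norm (indicator \<Omega> x + (f x)\<^sup>2)"
    proof (intro AE_I2)
      fix x
      show "norm (f x) \<le> norm (indicator \<Omega> x + (f x)\<^sup>2)"
      proof (cases "x \<in> \<Omega>")
        case True
        have "\<bar>f x\<bar> \<le> 1 + (f x)\<^sup>2" by (rule abs_le_sq)
        then show ?thesis using True by simp
      next
        case False then show ?thesis using out[of x] by simp
      qed
    qed
  qed
qed

lemma fourier3_cont:
  fixes f :: "real^3 \<Rightarrow> real"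
  assumes f: "integrable lborel f"
  shows "continuous_on UNIV (fourier3 f)"
proof -
  have fm[measurable]: "f \<in> borel_measurable borel" using f by auto
  have cm: "(\<lambda>x. cis (- (k \<bullet> x)) * complex_of_real (f x)) \<in> borel_measurable lborel" for k :: "real^3"
  proof -
    have cc: "continuous_on UNIV (\<lambda>x::real^3. cis (- (k \<bullet> x)))" unfolding cis_conv_exp by (intro continuous_intros)
    have [measurable]: "(\<lambda>x::real^3. cis (- (k \<bullet> x))) \<in> borel_measurable borel"
      by (rule borel_measurable_continuous_onI[OF cc])
    show ?thesis by measurable
  qed
  show ?thesis
  proof (intro continuous_at_imp_continuous_on ballI)
    fix k :: "real^3"
    show "isCont (fourier3 f) k"
    unfolding continuous_at_sequentially
  proof (intro allI impI)
    fix X :: "nat \<Rightarrow> real^3" assume X: "X \<longlonglongrightarrow> k"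
    show "(fourier3 f \<circ> X) \<longlonglongrightarrow> fourier3 f k"
      unfolding o_def fourier3_def
    proof (rule integral_dominated_convergence[where w="\<lambda>x. norm (f x)"])
      show "(\<lambda>x. cis (- (k \<bullet> x)) * complex_of_real (f x)) \<in> borel_measurable lborel" by (rule cm)
      show "(\<lambda>x. cis (- (X n \<bullet> x)) * complex_of_real (f x)) \<in> borel_measurable lborel" for n by (rule cm)
      show "integrable lborel (\<lambda>x. norm (f x))" using f by simp
      show "AE x in lborel. (\<lambda>n. cis (- (X n \<bullet> x)) * complex_of_real (f x)) \<longlonglongrightarrow> cis (- (k \<bullet> x)) * complex_of_real (f x)"
      proof (rule AE_I2)
        fix x
        have "(\<lambda>n. - (X n \<bullet> x)) \<longlonglongrightarrow> - (k \<bullet> x)" using X by (intro tendsto_intros)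
        then have "(\<lambda>n. cis (- (X n \<bullet> x))) \<longlonglongrightarrow> cis (- (k \<bullet> x))"
          unfolding cis_conv_exp by (rule tendsto_exp[OF tendsto_mult[OF tendsto_const tendsto_of_real]])
        then show "(\<lambda>n. cis (- (X n \<bullet> x)) * complex_of_real (f x)) \<longlonglongrightarrow> cis (- (k \<bullet> x)) * complex_of_real (f x)"
          by (rule tendsto_mult[OF _ tendsto_const])
      qed
      show "AE x in lborel. norm (cis (- (X n \<bullet> x)) * complex_of_real (f x)) \<le> norm (f x)" for n
        by (simp add: norm_mult)
    qed
  qed
  qed
qed

lemma cont_ae_zero:
  fixes u :: "real^3 \<Rightarrow> complex"
  assumes c: "continuous_on UNIV u" and ae: "AE x in lborel. u x = 0"
  shows "u x = 0"
proof (rule ccontr)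
  assume ne: "u x \<noteq> 0"
  define U where "U = {x. u x \<noteq> 0}"
  have "U = u -` (- {0})" unfolding U_def by auto
  then have oU: "open U" using open_vimage[of "- {0}" u] c by auto
  obtain N where N: "N \<in> null_sets lborel" "{x \<in> space lborel. \<not> u x = 0} \<subseteq> N"
    using ae[unfolded eventually_ae_filter] by blast
  have "U \<subseteq> N" using N(2) unfolding U_def by auto
  moreover have "negligible N"
    using N(1) by (simp add: negligible_iff_null_sets null_sets_completionI)
  ultimately have "negligible U" by (rule negligible_subset[rotated])
  moreover have "U \<noteq> {}" using ne unfolding U_def by auto
  ultimately show False using open_not_negligible[OF oU] by blast
qed

theorem proposition5p2:
  fixes \<Omega> :: "(real^3) set" and c0 \<tau>1 \<epsilon> T kc D :: real
  assumes "open \<Omega>" and "bounded \<Omega>"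
    and "c0 > 0" and "\<tau>1 > 0" and "\<epsilon> > 0" and "T > 0"
    and "kc = 2 / (\<tau>1 * c0)"
    and "D = 2 * (c0 / kc + \<epsilon>) * T"
    and "f \<in> L2_on \<Omega>" and "g \<in> L2_on \<Omega>"
    and "AE k in lborel.
           complex_of_real (A_symbol c0 \<tau>1 kc T k) * fourier3 (heat_smooth D f) k
         = complex_of_real (A_symbol c0 \<tau>1 kc T k) * fourier3 (heat_smooth D g) k"
  shows "AE x in lborel. f x = g x"
proof -
  note op = assms(1) and bd = assms(2) and c0 = assms(3) and t1 = assms(4) and ep = assms(5) and T = assms(6)
  have kc: "kc > 0" using assms(7) c0 t1 by simp
  have D: "D > 0" using assms(8) c0 kc ep T by (simp add: add_pos_pos)
  have fi: "integrable lborel f" by (rule L2_integrable[OF assms(9) op bd])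
  have gi: "integrable lborel g" by (rule L2_integrable[OF assms(10) op bd])
  have fo: "\<And>x. x \<notin> \<Omega> \<Longrightarrow> f x = 0" and go: "\<And>x. x \<notin> \<Omega> \<Longrightarrow> g x = 0"
    using assms(9,10) unfolding L2_on_def by auto
  have "AE k in lborel. fourier3 f k - fourier3 g k = 0"
    using assms(11) A_nonzero_ae[OF c0 kc, of \<tau>1 T]
  proof eventually_elim
    case (elim k)
    then have "fourier3 (heat_smooth D f) k = fourier3 (heat_smooth D g) k" by simp
    then have "complex_of_real (exp (- D * (norm k)\<^sup>2)) * fourier3 f k = complex_of_real (exp (- D * (norm k)\<^sup>2)) * fourier3 g k"
      unfolding fourier_heat[OF D fi] fourier_heat[OF D gi] .
    then show ?case by simp
  qed
  moreover have "continuous_on UNIV (\<lambda>k. fourier3 f k - fourier3 g k)"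
    using fourier3_cont[OF fi] fourier3_cont[OF gi] by (intro continuous_intros)
  ultimately have F0: "fourier3 f k - fourier3 g k = 0" for k
    using cont_ae_zero by blast
  define H where "H x = f x - g x" for x
  have Hi: "integrable lborel H" unfolding H_def using fi gi by simp
  have FH: "(\<integral>x. cis (w \<bullet> x) * complex_of_real (H x) \<partial>lborel) = 0" for w :: "real^3"
  proof -
    have i1: "integrable lborel (\<lambda>x. cis (- ((- w) \<bullet> x)) * complex_of_real (f x))"
      and i2: "integrable lborel (\<lambda>x. cis (- ((- w) \<bullet> x)) * complex_of_real (g x))"
    proof -
      have cc: "continuous_on UNIV (\<lambda>x::real^3. cis (- ((- w) \<bullet> x)))" unfolding cis_conv_exp by (intro continuous_intros)
      have [measurable]: "(\<lambda>x::real^3. cis (- ((- w) \<bullet> x))) \<in> borel_measurable borel"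
        by (rule borel_measurable_continuous_onI[OF cc])
      have fm[measurable]: "f \<in> borel_measurable borel" "g \<in> borel_measurable borel" using fi gi by auto
      show "integrable lborel (\<lambda>x. cis (- ((- w) \<bullet> x)) * complex_of_real (f x))"
        by (rule Bochner_Integration.integrable_bound[OF fi]) (measurable, simp add: norm_mult)
      show "integrable lborel (\<lambda>x. cis (- ((- w) \<bullet> x)) * complex_of_real (g x))"
        by (rule Bochner_Integration.integrable_bound[OF gi]) (measurable, simp add: norm_mult)
    qed
    have "(\<integral>x. cis (w \<bullet> x) * complex_of_real (H x) \<partial>lborel)
        = (\<integral>x. cis (- ((- w) \<bullet> x)) * complex_of_real (f x) - cis (- ((- w) \<bullet> x)) * complex_of_real (g x) \<partial>lborel)"
      unfolding H_def by (simp add: algebra_simps)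
    also have "\<dots> = fourier3 f (- w) - fourier3 g (- w)"
      unfolding fourier3_def using i1 i2 by simp
    also have "\<dots> = 0" by (rule F0)
    finally show ?thesis .
  qed
  have K: "compact (closure \<Omega>)" using bd by (simp add: compact_closure)
  have "AE x in lborel. H x = 0"
  proof (rule fourier_unique[OF Hi K])
    fix x assume "x \<notin> closure \<Omega>"
    then have "x \<notin> \<Omega>" using closure_subset by blast
    then show "H x = 0" unfolding H_def using fo go by simp
  qed (rule FH)
  then show ?thesis unfolding H_def by auto
qed

end
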